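(* Let $p$ be an odd prime and let $G=C_p\rtimes C_{p-1}\cong(\mathbb{F}_p,+)\rtimes(\mathbb{F}_p^\times,\times)$ act on $\mathbb{F}_p[t]/(t-1)^p=\mathbb{F}_p[t]/(t^p-1)$ by $(c,m)\cdot t^x=t^{c+mx}$. Then the $\mathbb{F}_p[G]$-submodule generated by $$\bar y=\sum_{i\in\mathbb{F}_p^\times}i^{-1}t^i$$ equals $(t-1)\mathbb{F}_p[t]/(t-1)^p$, the kernel of the augmentation $\mathbb{F}_p[t]/(t-1)^p\to\mathbb{F}_p$, $t\mapsto1$. *)

theory Defs
  imports "HOL-Number_Theory.Number_Theory"
begin

text \<open>The ring F_p[t]/(t^p - 1) is modelled by coefficient vectors f :: nat => int,
  where f x (for x < p) is the coefficient of t^x, reduced to {0..<p}, and f x = 0 for x >= p.\<close>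

definition Quot :: "nat \<Rightarrow> (nat \<Rightarrow> int) set" where
  "Quot p = {f. \<forall>k. (k < p \<longrightarrow> 0 \<le> f k \<and> f k < int p) \<and> (\<not> k < p \<longrightarrow> f k = 0)}"

definition fpnorm :: "nat \<Rightarrow> (nat \<Rightarrow> int) \<Rightarrow> (nat \<Rightarrow> int)" where
  "fpnorm p f = (\<lambda>k. if k < p then f k mod int p else 0)"

definition act :: "nat \<Rightarrow> nat \<Rightarrow> nat \<Rightarrow> (nat \<Rightarrow> int) \<Rightarrow> (nat \<Rightarrow> int)" where
  "act p c m f = fpnorm p (\<lambda>k. \<Sum>x<p. if [int c + int m * int x = int k] (mod int p) then f x else 0)"

definition modinv :: "nat \<Rightarrow> nat \<Rightarrow> int" where
  "modinv p i = (THE j. 0 \<le> j \<and> j < int p \<and> [int i * j = 1] (mod int p))"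

definition ybar :: "nat \<Rightarrow> (nat \<Rightarrow> int)" where
  "ybar p = fpnorm p (\<lambda>i. if 1 \<le> i then modinv p i else 0)"

text \<open>F_p[G]-submodule generated by v: all (sum_g a_g g) . v with a_g in F_p, G = {(c,m). c < p, 1 <= m < p}.\<close>
definition gen_submodule :: "nat \<Rightarrow> (nat \<Rightarrow> int) \<Rightarrow> (nat \<Rightarrow> int) set" where
  "gen_submodule p v =
     {fpnorm p (\<lambda>k. \<Sum>c<p. \<Sum>m\<in>{1..<p}. a c m * act p c m v k) | a :: nat \<Rightarrow> nat \<Rightarrow> int. True}"

text \<open>The ideal (t-1) F_p[t]/(t^p-1): coefficient k of (t-1)h is h(k-1 mod p) - h(k).\<close>
definition t_minus_1_ideal :: "nat \<Rightarrow> (nat \<Rightarrow> int) set" where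
  "t_minus_1_ideal p = {fpnorm p (\<lambda>k. h ((k + p - 1) mod p) - h k) | h. h \<in> Quot p}"

definition aug_kernel :: "nat \<Rightarrow> (nat \<Rightarrow> int) set" where
  "aug_kernel p = {f \<in> Quot p. (\<Sum>k<p. f k) mod int p = 0}"

end

theory Submission
  imports Defs
begin


lemma reindex_sub:
  fixes G :: "int \<Rightarrow> int" and k :: int
  assumes "p > 0"
  shows "(\<Sum>c<p. G ((k - int c) mod int p)) = (\<Sum>u<p. G (int u))"
proof (rule sum.reindex_bij_witness[of _ "\<lambda>u. nat ((k - int u) mod int p)" "\<lambda>c. nat ((k - int c) mod int p)"])
  fix a assume "a \<in> {..<p}"
  then show "nat ((k - int (nat ((k - int a) mod int p))) mod int p) = a"
    using assms by (simp add: mod_diff_right_eq)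
next
  fix a assume "a \<in> {..<p}"
  then show "nat ((k - int a) mod int p) \<in> {..<p}" using assms
    by (simp add: nat_less_iff)
next
  fix a assume "a \<in> {..<p}"
  then show "nat ((k - int (nat ((k - int a) mod int p))) mod int p) = a"
    using assms by (simp add: mod_diff_right_eq)
next
  fix a assume "a \<in> {..<p}"
  then show "nat ((k - int a) mod int p) \<in> {..<p}" using assms
    by (simp add: nat_less_iff)
next
  fix a assume "a \<in> {..<p}"
  then show "G (int (nat ((k - int a) mod int p))) = G ((k - int a) mod int p)"
    using assms by simp
qed

lemma reindex_sub_cong:
  fixes G :: "int \<Rightarrow> int" and k :: int
  assumes "p > 0" and G: "\<And>x y. [x = y] (mod int p) \<Longrightarrow> [G x = G y] (mod int p)"
  shows "[(\<Sum>c<p. G (k - int c)) = (\<Sum>u<p. G (int u))] (mod int p)"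
proof -
  have "[(\<Sum>c<p. G (k - int c)) = (\<Sum>c<p. G ((k - int c) mod int p))] (mod int p)"
    by (rule cong_sum, rule G) (simp add: cong_def)
  then show ?thesis using reindex_sub[OF assms(1), of G k] by simp
qed

lemma reindex_mult:
  fixes G :: "int \<Rightarrow> int" and g :: nat
  assumes "prime p" and "coprime p g"
  shows "(\<Sum>u<p. G ((int g * int u) mod int p)) = (\<Sum>u<p. G (int u))"
proof -
  have p0: "p > 0" using assms prime_gt_0_nat by blast
  let ?f = "\<lambda>u. (g * u) mod p"
  have inj: "inj_on ?f {..<p}"
  proof
    fix x y assume x: "x \<in> {..<p}" and y: "y \<in> {..<p}" and e: "?f x = ?f y"
    then have "[g * x = g * y] (mod p)" by (simp add: cong_def)
    then have "[x = y] (mod p)" using assms(2) cong_mult_lcancel_nat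
      by (metis coprime_commute)
    then show "x = y" using x y by (simp add: cong_def)
  qed
  have sub: "?f ` {..<p} \<subseteq> {..<p}" using p0 by auto
  have im: "?f ` {..<p} = {..<p}" using endo_inj_surj[OF _ sub inj] by simp
  have "(\<Sum>u<p. G (int u)) = (\<Sum>u\<in>?f ` {..<p}. G (int u))" using im by simp
  also have "\<dots> = (\<Sum>u<p. G (int ((g * u) mod p)))" by (rule sum.reindex[OF inj, unfolded comp_def])
  also have "\<dots> = (\<Sum>u<p. G ((int g * int u) mod int p))" by (simp add: zmod_int)
  finally show ?thesis by simp
qed



lemma pow_sum_zero:
  assumes p: "prime p" and nd: "\<not> (p - 1) dvd e"
  shows "[(\<Sum>u<p. int u ^ e) = 0] (mod int p)"
proof -
  obtain g where g: "residue_primroot p g" using prime_primitive_root_exists[OF prime_gt_1_nat[OF p] p] by blast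
  have cop: "coprime p g" and ordg: "ord p g = p - 1"
    using g p by (auto simp: residue_primroot_def totient_prime)
  have ng: "\<not> [g ^ e = 1] (mod p)" using ordg nd ord_divides by metis
  let ?S = "\<Sum>u<p. int u ^ e"
  have "[int g ^ e * ?S = (\<Sum>u<p. (int g * int u) ^ e)] (mod int p)"
    by (simp add: sum_distrib_left power_mult_distrib)
  also have "[(\<Sum>u<p. (int g * int u) ^ e) = (\<Sum>u<p. ((int g * int u) mod int p) ^ e)] (mod int p)"
    by (rule cong_sum, rule cong_pow) (simp add: cong_def)
  also have "(\<Sum>u<p. ((int g * int u) mod int p) ^ e) = ?S"
    using reindex_mult[OF p cop, of "\<lambda>x. x ^ e"] by simp
  finally have "[int g ^ e * ?S = ?S] (mod int p)" .
  then have "int p dvd (int g ^ e - 1) * ?S"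
    by (simp add: cong_iff_dvd_diff algebra_simps dvd_diff_commute)
  moreover have "\<not> int p dvd (int g ^ e - 1)"
  proof
    assume "int p dvd (int g ^ e - 1)"
    then have "[int g ^ e = 1] (mod int p)" by (simp add: cong_iff_dvd_diff)
    then have "[g ^ e = 1] (mod p)" by (metis cong_int_iff of_nat_1 of_nat_power)
    then show False using ng by simp
  qed
  moreover have "prime (int p)" using p by simp
  ultimately have "int p dvd ?S" using prime_dvd_mult_iff by blast
  then show ?thesis by (simp add: cong_0_iff)
qed

lemma fermat_int:
  assumes p: "prime p" and u: "0 < u" "u < p"
  shows "[int u ^ (p - 1) = 1] (mod int p)"
proof -
  have "\<not> p dvd u" using u by (auto dest: dvd_imp_le)
  then have "[u ^ (p - 1) = 1] (mod p)" using fermat_theorem[OF p] by blast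
  then show ?thesis by (metis cong_int_iff of_nat_1 of_nat_power)
qed

lemma pow_sum_pm1:
  assumes p: "prime p"
  shows "[(\<Sum>u<p. int u ^ (p - 1)) = -1] (mod int p)"
proof -
  have p1: "p > 1" using p prime_gt_1_nat by blast
  have "[(\<Sum>u<p. int u ^ (p - 1)) = (\<Sum>u<p. if u = 0 then 0 else 1)] (mod int p)"
  proof (rule cong_sum)
    fix u assume "u \<in> {..<p}"
    then show "[int u ^ (p - 1) = (if u = 0 then 0 else 1)] (mod int p)"
      using fermat_int[OF p, of u] p1 by (auto simp: power_0_left)
  qed
  also have "(\<Sum>u<p. if u = 0 then 0 else 1 :: int) = int p - 1"
  proof -
    have "(\<Sum>u<p. if u = 0 then 0 else 1 :: int) = (\<Sum>u<p. 1 - (if u = 0 then 1 else 0))"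
      by (rule sum.cong) auto
    also have "\<dots> = int p - 1" using p1 by (simp add: sum_subtractf)
    finally show ?thesis .
  qed
  also have "[int p - 1 = -1] (mod int p)" by (simp add: cong_iff_dvd_diff)
  finally show ?thesis .
qed



lemma not_dvd_between:
  fixes d x :: nat
  assumes "d < x" "x < 2 * d"
  shows "\<not> d dvd x"
proof
  assume "d dvd x"
  then obtain q where q: "x = d * q" by blast
  show False
  proof (cases "q \<le> 1")
    case True
    then have "x \<le> d" using q by (metis mult.right_neutral mult_le_mono2)
    then show False using assms by simp
  next
    case False
    then have "q \<ge> 2" by simp
    then have "x \<ge> d * 2" using q by (metis mult_le_mono2)
    then show False using assms by simp
  qed
qed

lemma L4:
  assumes p: "prime p" and p3: "p \<ge> 3" and n: "1 \<le> n" "n \<le> p - 1"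
  shows "[(\<Sum>u<p. (K - int u) ^ n * int u ^ (p - 2)) = int n * K ^ (n - 1)] (mod int p)"
proof -
  define c where "c l = of_nat (n choose l) * (-1) ^ l * K ^ (n - l)" for l
  have "(\<Sum>u<p. (K - int u) ^ n * int u ^ (p - 2))
        = (\<Sum>u<p. \<Sum>l\<le>n. c l * int u ^ (l + (p - 2)))"
  proof (rule sum.cong[OF refl])
    fix u
    have "(K - int u) ^ n = (- int u + K) ^ n" by simp
    also have "\<dots> = (\<Sum>l\<le>n. of_nat (n choose l) * (- int u) ^ l * K ^ (n - l))"
      by (rule binomial_ring)
    also have "\<dots> = (\<Sum>l\<le>n. c l * int u ^ l)"
      unfolding c_def by (subst power_minus) (simp only: mult_ac)
    finally show "(K - int u) ^ n * int u ^ (p - 2) = (\<Sum>l\<le>n. c l * int u ^ (l + (p - 2)))"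
      by (simp add: sum_distrib_right power_add mult.assoc)
  qed
  also have "\<dots> = (\<Sum>l\<le>n. c l * (\<Sum>u<p. int u ^ (l + (p - 2))))"
    unfolding sum_distrib_left by (rule sum.swap)
  also have "[\<dots> = (\<Sum>l\<le>n. c l * (if l = 1 then -1 else 0))] (mod int p)"
  proof (rule cong_sum, rule cong_scalar_left)
    fix l assume l: "l \<in> {..n}"
    show "[(\<Sum>u<p. int u ^ (l + (p - 2))) = (if l = 1 then -1 else 0)] (mod int p)"
    proof (cases "l = 1")
      case True
      then have "l + (p - 2) = p - 1" using p3 by simp
      then show ?thesis using True pow_sum_pm1[OF p] by simp
    next
      case False
      have "\<not> (p - 1) dvd (l + (p - 2))"
      proof (cases "l = 0")
        case True
        then show ?thesis using p3 by (auto dest: dvd_imp_le)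
      next
        case False
        then have "l \<ge> 2" using \<open>l \<noteq> 1\<close> by simp
        then show ?thesis using l n p3 by (intro not_dvd_between) auto
      qed
      then show ?thesis using False pow_sum_zero[OF p] by simp
    qed
  qed
  also have "(\<Sum>l\<le>n. c l * (if l = 1 then -1 else 0)) = - c 1"
  proof -
    have "(\<Sum>l\<le>n. c l * (if l = 1 then -1 else 0)) = (\<Sum>l\<le>n. if l = 1 then - c l else 0)"
      by (rule sum.cong) auto
    also have "\<dots> = - c 1" using n by simp
    finally show ?thesis .
  qed
  also have "- c 1 = int n * K ^ (n - 1)" unfolding c_def by (simp only: choose_one power_one_right)
  finally show ?thesis .
qed



lemma modinv_eq:
  assumes p: "prime p" and i: "1 \<le> i" "i < p"
  shows "modinv p i = (int i ^ (p - 2)) mod int p"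
  unfolding modinv_def
proof (rule the_equality)
  have p2: "p \<ge> 2" using p prime_ge_2_nat by blast
  have e: "int i * int i ^ (p - 2) = int i ^ (p - 1)"
    using p2 by (metis Suc_diff_Suc Suc_1 diff_Suc_1 less_eq_Suc_le power_Suc)
  have f: "[int i ^ (p - 1) = 1] (mod int p)" using fermat_int[OF p] i by simp
  have c0: "[int i * (int i ^ (p - 2) mod int p) = 1] (mod int p)"
    using e f by (metis cong_def mod_mult_right_eq)
  show "0 \<le> int i ^ (p - 2) mod int p \<and> int i ^ (p - 2) mod int p < int p \<and>
        [int i * (int i ^ (p - 2) mod int p) = 1] (mod int p)"
    using p2 c0 by simp
  fix j assume j: "0 \<le> j \<and> j < int p \<and> [int i * j = 1] (mod int p)"
  have "[j = j * (int i * (int i ^ (p - 2) mod int p))] (mod int p)"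
    using cong_scalar_left[OF c0, of j] by (simp add: cong_sym)
  also have "j * (int i * (int i ^ (p - 2) mod int p)) = (int i * j) * (int i ^ (p - 2) mod int p)"
    by (simp add: ac_simps)
  also have "[\<dots> = 1 * (int i ^ (p - 2) mod int p)] (mod int p)"
    using j by (intro cong_scalar_right) simp
  finally have "[j = int i ^ (p - 2) mod int p] (mod int p)" by simp
  then show "j = int i ^ (p - 2) mod int p"
    using j p2 by (intro cong_less_imp_eq_int) auto
qed

lemma ybar_cong:
  assumes p: "prime p" and p3: "p \<ge> 3" and x: "x < p"
  shows "[ybar p x = int x ^ (p - 2)] (mod int p)"
proof (cases "x = 0")
  case True
  then show ?thesis using p3 by (simp add: ybar_def fpnorm_def x power_0_left)
next
  case False
  then show ?thesis using x modinv_eq[OF p, of x] by (simp add: ybar_def fpnorm_def cong_def)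
qed

lemma act1:
  assumes p0: "p > 0" and k: "k < p"
  shows "act p c 1 v k = v (nat ((int k - int c) mod int p)) mod int p"
proof -
  let ?a = "nat ((int k - int c) mod int p)"
  have iff: "[int c + int x = int k] (mod int p) \<longleftrightarrow> ?a = x" if x: "x < p" for x
  proof
    assume "[int c + int x = int k] (mod int p)"
    then have "[int x = int k - int c] (mod int p)"
      by (metis add_diff_cancel_left' cong_diff cong_refl)
    then have "int x mod int p = (int k - int c) mod int p" by (simp add: cong_def)
    then show "?a = x" using x by simp
  next
    assume "?a = x"
    then have "int x = int ?a" by simp
    also have "int ?a = (int k - int c) mod int p" using p0 by simp
    finally have "int x = (int k - int c) mod int p" .
    then show "[int c + int x = int k] (mod int p)"
      by (simp add: cong_def mod_add_right_eq)
  qed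
  have "(\<Sum>x<p. if [int c + int x = int k] (mod int p) then v x else 0) =
        (\<Sum>x<p. if ?a = x then v x else 0)"
    by (rule sum.cong) (auto simp: iff)
  also have "\<dots> = v ?a" using p0 by (simp add: nat_less_iff)
  finally show ?thesis using k by (simp add: act_def fpnorm_def)
qed

lemma act_sum:
  assumes p0: "p > 0"
  shows "[(\<Sum>k<p. act p c m v k) = (\<Sum>x<p. v x)] (mod int p)"
proof -
  have "[(\<Sum>k<p. act p c m v k) =
         (\<Sum>k<p. \<Sum>x<p. if [int c + int m * int x = int k] (mod int p) then v x else 0)] (mod int p)"
    by (rule cong_sum) (simp add: act_def fpnorm_def cong_def)
  also have "(\<Sum>k<p. \<Sum>x<p. if [int c + int m * int x = int k] (mod int p) then v x else 0)
     = (\<Sum>x<p. \<Sum>k<p. if [int c + int m * int x = int k] (mod int p) then v x else 0)"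
    by (rule sum.swap)
  also have "\<dots> = (\<Sum>x<p. v x)"
  proof (rule sum.cong[OF refl])
    fix x
    let ?a = "nat ((int c + int m * int x) mod int p)"
    have iff: "[int c + int m * int x = int k] (mod int p) \<longleftrightarrow> ?a = k" if k: "k < p" for k
    proof
      assume "[int c + int m * int x = int k] (mod int p)"
      then show "?a = k" using k by (simp add: cong_def)
    next
      assume "?a = k"
      then have "int k = int ?a" by simp
      also have "int ?a = (int c + int m * int x) mod int p" using p0 by simp
      finally have "int k = (int c + int m * int x) mod int p" .
      then show "[int c + int m * int x = int k] (mod int p)" by (simp add: cong_def)
    qed
    have "(\<Sum>k<p. if [int c + int m * int x = int k] (mod int p) then v x else 0)
          = (\<Sum>k<p. if ?a = k then v x else 0)"
      by (rule sum.cong) (auto simp: iff)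
    also have "\<dots> = v x" using p0 by (simp add: nat_less_iff)
    finally show "(\<Sum>k<p. if [int c + int m * int x = int k] (mod int p) then v x else 0) = v x" .
  qed
  finally show ?thesis .
qed

lemma geo:
  fixes K :: int
  assumes p: "prime p"
  shows "[(\<Sum>m<p - 1. K ^ m) = (if [K = 0] (mod int p) then 1 else 0) - (if [K = 1] (mod int p) then 1 else 0)] (mod int p)"
proof -
  have p2: "p \<ge> 2" using p prime_ge_2_nat by blast
  have n01: "\<not> [0 = 1] (mod int p)" using p2 by (simp add: cong_0_1_int)
  consider "[K = 0] (mod int p)" | "[K = 1] (mod int p)" | "\<not> [K = 0] (mod int p)" "\<not> [K = 1] (mod int p)" by blast
  then show ?thesis
  proof cases
    case 1
    have "[(\<Sum>m<p - 1. K ^ m) = (\<Sum>m<p - 1. 0 ^ m)] (mod int p)"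
      by (intro cong_sum cong_pow 1)
    also have "(\<Sum>m<p - 1. (0::int) ^ m) = (\<Sum>m<p - 1. if m = 0 then 1 else 0)"
      by (rule sum.cong) (auto simp: power_0_left)
    also have "\<dots> = 1" using p2 by simp
    finally show ?thesis using 1 n01 by (auto dest: cong_sym cong_trans)
  next
    case 2
    have "[(\<Sum>m<p - 1. K ^ m) = (\<Sum>m<p - 1. 1 ^ m)] (mod int p)"
      by (intro cong_sum cong_pow 2)
    also have "(\<Sum>m<p - 1. (1::int) ^ m) = int p - 1" using p2 by simp
    also have "[int p - 1 = -1] (mod int p)" by (simp add: cong_iff_dvd_diff)
    finally have "[(\<Sum>m<p - 1. K ^ m) = -1] (mod int p)" .
    moreover have "\<not> [K = 0] (mod int p)" using 2 n01 by (meson cong_sym cong_trans)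
    ultimately show ?thesis using 2 by simp
  next
    case 3
    let ?k = "nat (K mod int p)"
    have ge: "K mod int p \<ge> 0" using p2 by simp
    have ne: "K mod int p \<noteq> 0" using 3(1) by (simp add: cong_def)
    have kp: "?k < p" using p2 by (simp add: nat_less_iff)
    have k0: "0 < ?k" using ge ne by linarith
    have kk: "[int ?k = K] (mod int p)" using p2 by (simp add: cong_def)
    have "[K ^ (p - 1) = 1] (mod int p)"
      using cong_trans[OF cong_pow[OF cong_sym[OF kk]] fermat_int[OF p k0 kp]] .
    then have "int p dvd K ^ (p - 1) - 1" by (simp add: cong_iff_dvd_diff)
    then have "int p dvd (K - 1) * (\<Sum>m<p - 1. K ^ m)" by (simp add: power_diff_1_eq)
    moreover have "\<not> int p dvd (K - 1)" using 3(2) by (simp add: cong_iff_dvd_diff)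
    moreover have "prime (int p)" using p by simp
    ultimately have "int p dvd (\<Sum>m<p - 1. K ^ m)" using prime_dvd_mult_iff by blast
    then show ?thesis using 3 by (simp add: cong_0_iff)
  qed
qed



lemma fpnorm_Quot: "p > 0 \<Longrightarrow> fpnorm p f \<in> Quot p"
  by (simp add: fpnorm_def Quot_def)

lemma Quot_mod: "f \<in> Quot p \<Longrightarrow> k < p \<Longrightarrow> f k mod int p = f k"
  by (simp add: Quot_def)

lemma ybar_sum:
  assumes p: "prime p" and p3: "p \<ge> 3"
  shows "[(\<Sum>x<p. ybar p x) = 0] (mod int p)"
proof -
  have "[(\<Sum>x<p. ybar p x) = (\<Sum>x<p. int x ^ (p - 2))] (mod int p)"
    by (rule cong_sum) (use ybar_cong[OF p p3] in auto)
  also have "[(\<Sum>x<p. int x ^ (p - 2)) = 0] (mod int p)"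
    by (rule pow_sum_zero[OF p]) (use p3 in \<open>auto dest: dvd_imp_le\<close>)
  finally show ?thesis .
qed

lemma gen_sub_aug:
  assumes p: "prime p" and p3: "p \<ge> 3"
  shows "gen_submodule p (ybar p) \<subseteq> aug_kernel p"
proof
  fix g assume "g \<in> gen_submodule p (ybar p)"
  then obtain a where g: "g = fpnorm p (\<lambda>k. \<Sum>c<p. \<Sum>m\<in>{1..<p}. a c m * act p c m (ybar p) k)"
    by (auto simp: gen_submodule_def)
  have p0: "p > 0" using p3 by simp
  have "[(\<Sum>k<p. g k) = (\<Sum>k<p. \<Sum>c<p. \<Sum>m\<in>{1..<p}. a c m * act p c m (ybar p) k)] (mod int p)"
    by (rule cong_sum) (simp add: g fpnorm_def cong_def)
  also have "(\<Sum>k<p. \<Sum>c<p. \<Sum>m\<in>{1..<p}. a c m * act p c m (ybar p) k)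
      = (\<Sum>c<p. \<Sum>m\<in>{1..<p}. a c m * (\<Sum>k<p. act p c m (ybar p) k))"
  proof -
    have "(\<Sum>k<p. \<Sum>c<p. \<Sum>m\<in>{1..<p}. a c m * act p c m (ybar p) k)
        = (\<Sum>c<p. \<Sum>k<p. \<Sum>m\<in>{1..<p}. a c m * act p c m (ybar p) k)" by (rule sum.swap)
    also have "\<dots> = (\<Sum>c<p. \<Sum>m\<in>{1..<p}. \<Sum>k<p. a c m * act p c m (ybar p) k)"
      by (rule sum.cong[OF refl], rule sum.swap)
    also have "\<dots> = (\<Sum>c<p. \<Sum>m\<in>{1..<p}. a c m * (\<Sum>k<p. act p c m (ybar p) k))"
      by (simp only: sum_distrib_left)
    finally show ?thesis .
  qed
  also have "[\<dots> = (\<Sum>c<p. \<Sum>m\<in>{1..<p}. a c m * 0)] (mod int p)"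
    by (intro cong_sum cong_scalar_left cong_trans[OF act_sum[OF p0] ybar_sum[OF p p3]])
  finally have "(\<Sum>k<p. g k) mod int p = 0" by (simp add: cong_def)
  then show "g \<in> aug_kernel p" using fpnorm_Quot[OF p0] g by (simp add: aug_kernel_def)
qed

lemma shift_sum:
  fixes p :: nat
  assumes p0: "p > 0"
  shows "(\<Sum>k<p. h ((k + p - 1) mod p)) = (\<Sum>k<p. (h k :: int))"
proof (rule sum.reindex_bij_witness[of _ "\<lambda>k. (k + 1) mod p" "\<lambda>k. (k + p - 1) mod p"])
  fix a assume a: "a \<in> {..<p}"
  show "(((a + p - 1) mod p) + 1) mod p = a"
  proof (cases "a = 0")
    case True
    have "p - 1 < p" using p0 by simp
    then show ?thesis using True p0 by simp
  next
    case False
    have eq: "a + p - 1 = (a - 1) + p" using False by simp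
    have "(a + p - 1) mod p = ((a - 1) + p) mod p" by (simp only: eq)
    also have "\<dots> = (a - 1) mod p" by (rule mod_add_self2)
    also have "\<dots> = a - 1" using a by simp
    finally have "(a + p - 1) mod p = a - 1" .
    then show ?thesis using a False by simp
  qed
next
  fix a assume a: "a \<in> {..<p}"
  show "(a + p - 1) mod p \<in> {..<p}" using p0 by simp
next
  fix a assume a: "a \<in> {..<p}"
  show "((a + 1) mod p + p - 1) mod p = a"
  proof (cases "a + 1 = p")
    case True then show ?thesis using p0 by simp
  next
    case False then have "a + 1 < p" using a by simp
    then show ?thesis by simp
  qed
next
  fix a assume a: "a \<in> {..<p}"
  show "(a + 1) mod p \<in> {..<p}" using p0 by simp
next
  fix a assume a: "a \<in> {..<p}"
  show "h ((a + p - 1) mod p) = h ((a + p - 1) mod p)" by (rule refl)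
qed

lemma ideal_sub_aug:
  assumes p0: "p > 0"
  shows "t_minus_1_ideal p \<subseteq> aug_kernel p"
proof
  fix g assume "g \<in> t_minus_1_ideal p"
  then obtain h where g: "g = fpnorm p (\<lambda>k. h ((k + p - 1) mod p) - h k)"
    by (auto simp: t_minus_1_ideal_def)
  have "[(\<Sum>k<p. g k) = (\<Sum>k<p. h ((k + p - 1) mod p) - h k)] (mod int p)"
    by (rule cong_sum) (simp add: g fpnorm_def cong_def)
  also have "(\<Sum>k<p. h ((k + p - 1) mod p) - h k) = 0"
    unfolding sum_subtractf shift_sum[OF p0] by simp
  finally have "(\<Sum>k<p. g k) mod int p = 0" by (simp add: cong_def)
  then show "g \<in> aug_kernel p" using fpnorm_Quot[OF p0] g by (simp add: aug_kernel_def)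
qed

lemma aug_sub_ideal:
  assumes p0: "p > 0"
  shows "aug_kernel p \<subseteq> t_minus_1_ideal p"
proof
  fix f assume f: "f \<in> aug_kernel p"
  then have fQ: "f \<in> Quot p" and fs: "(\<Sum>k<p. f k) mod int p = 0" by (auto simp: aug_kernel_def)
  define h where "h k = (if k < p then (- (\<Sum>i\<le>k. f i)) mod int p else 0)" for k
  have hQ: "h \<in> Quot p" using p0 by (simp add: h_def Quot_def)
  have "f = fpnorm p (\<lambda>k. h ((k + p - 1) mod p) - h k)"
  proof
    fix k
    show "f k = fpnorm p (\<lambda>k. h ((k + p - 1) mod p) - h k) k"
    proof (cases "k < p")
      case False then show ?thesis using fQ by (simp add: fpnorm_def Quot_def)
    next
      case True
      have "[h ((k + p - 1) mod p) - h k = f k] (mod int p)"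
      proof (cases "k = 0")
        case True
        have e: "(k + p - 1) mod p = p - 1" using True p0 by simp
        have "{..p - 1} = {..<p}" using p0 by auto
        then have "[h (p - 1) = 0] (mod int p)" using p0 fs by (simp add: h_def cong_def zmod_zminus1_eq_if)
        moreover have "[h k = - f 0] (mod int p)" using True p0 by (simp add: h_def cong_def)
        ultimately have "[h (p - 1) - h k = 0 - (- f 0)] (mod int p)" by (rule cong_diff)
        then show ?thesis using e True by simp
      next
        case False
        have eq: "k + p - 1 = (k - 1) + p" using False by simp
        have "(k + p - 1) mod p = ((k - 1) + p) mod p" by (simp only: eq)
        also have "\<dots> = (k - 1) mod p" by (rule mod_add_self2)
        also have "\<dots> = k - 1" using True by simp
        finally have e: "(k + p - 1) mod p = k - 1" .
        have s: "(\<Sum>i\<le>k. f i) = (\<Sum>i\<le>k - 1. f i) + f k"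
          using False by (cases k) simp_all
        have "[h (k - 1) - h k = (- (\<Sum>i\<le>k - 1. f i)) - (- (\<Sum>i\<le>k. f i))] (mod int p)"
          using True by (intro cong_diff) (simp_all add: h_def cong_def)
        then show ?thesis using e s by simp
      qed
      then show ?thesis using True Quot_mod[OF fQ True] by (simp add: fpnorm_def cong_def)
    qed
  qed
  then show "f \<in> t_minus_1_ideal p" using hQ by (auto simp: t_minus_1_ideal_def)
qed



lemma modinv_mul:
  assumes p: "prime p" and i: "1 \<le> i" "i < p"
  shows "[int i * modinv p i = 1] (mod int p)"
proof -
  have p2: "p \<ge> 2" using p prime_ge_2_nat by blast
  have e: "int i * int i ^ (p - 2) = int i ^ (p - 1)"
    using p2 by (metis Suc_diff_Suc Suc_1 diff_Suc_1 less_eq_Suc_le power_Suc)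
  have f: "[int i ^ (p - 1) = 1] (mod int p)" using fermat_int[OF p] i by simp
  show ?thesis unfolding modinv_eq[OF p i]
    using e f by (metis cong_def mod_mult_right_eq)
qed

lemma delta0:
  assumes "k < p" "c < p"
  shows "[int k - int c = 0] (mod int p) \<longleftrightarrow> c = k"
proof -
  have "[int k - int c = 0] (mod int p) \<longleftrightarrow> [int k = int c] (mod int p)"
    by (simp add: cong_iff_dvd_diff)
  also have "\<dots> \<longleftrightarrow> [k = c] (mod p)" by (rule cong_int_iff)
  also have "\<dots> \<longleftrightarrow> c = k" using assms by (auto simp: cong_def)
  finally show ?thesis .
qed

lemma delta1:
  assumes "k < p" "c < p"
  shows "[int k - int c = 1] (mod int p) \<longleftrightarrow> c = (if k = 0 then p - 1 else k - 1)"
proof -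
  have "[int k - int c = 1] (mod int p) \<longleftrightarrow> [int k = int (c + 1)] (mod int p)"
    by (simp add: cong_iff_dvd_diff algebra_simps)
  also have "\<dots> \<longleftrightarrow> [k = c + 1] (mod p)" by (rule cong_int_iff)
  also have "\<dots> \<longleftrightarrow> k = (c + 1) mod p" using assms by (simp add: cong_def)
  also have "\<dots> \<longleftrightarrow> c = (if k = 0 then p - 1 else k - 1)"
  proof (cases "c + 1 = p")
    case True then show ?thesis using assms by auto
  next
    case False then have "c + 1 < p" using assms by simp
    then show ?thesis using assms by auto
  qed
  finally show ?thesis .
qed



lemma inner_conv:
  assumes p: "prime p" and p3: "p \<ge> 3" and m: "m < p - 1"
  shows "[(\<Sum>c<p. (int c - int c') ^ (m + 1) * (int k - int c) ^ (p - 2))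
          = int (m + 1) * (int k - int c') ^ m] (mod int p)"
proof -
  have p0: "p > 0" using p3 by simp
  define G where "G w = ((int k - int c') - w) ^ (m + 1) * w ^ (p - 2)" for w
  have Gc: "[G x = G y] (mod int p)" if "[x = y] (mod int p)" for x y
    unfolding G_def by (intro cong_mult cong_pow cong_diff cong_refl that)
  have "(\<Sum>c<p. (int c - int c') ^ (m + 1) * (int k - int c) ^ (p - 2)) = (\<Sum>c<p. G (int k - int c))"
    by (simp add: G_def)
  also have "[\<dots> = (\<Sum>u<p. G (int u))] (mod int p)"
    by (rule reindex_sub_cong[OF p0 Gc])
  also have "(\<Sum>u<p. G (int u)) = (\<Sum>u<p. ((int k - int c') - int u) ^ (m + 1) * int u ^ (p - 2))"
    by (simp add: G_def)
  also have "[\<dots> = int (m + 1) * (int k - int c') ^ (m + 1 - 1)] (mod int p)"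
    by (rule L4[OF p p3]) (use m in auto)
  finally show ?thesis by simp
qed

lemma aug_sub_gen:
  assumes p: "prime p" and p3: "p \<ge> 3"
  shows "aug_kernel p \<subseteq> gen_submodule p (ybar p)"
proof
  fix f assume f: "f \<in> aug_kernel p"
  then have fQ: "f \<in> Quot p" and fs: "(\<Sum>k<p. f k) mod int p = 0" by (auto simp: aug_kernel_def)
  have p0: "p > 0" using p3 by simp
  define F where "F c = (\<Sum>i\<le>c. f i)" for c
  define M where "M m = modinv p (m + 1)" for m
  define A where "A d = (\<Sum>c'<p. F c' * (\<Sum>m<p - 1. M m * (int d - int c') ^ (m + 1)))" for d
  define a where "a c m = (if m = 1 then A c else 0)" for c m :: nat
  have "f = fpnorm p (\<lambda>k. \<Sum>c<p. \<Sum>m\<in>{1..<p}. a c m * act p c m (ybar p) k)"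
  proof
    fix k
    show "f k = fpnorm p (\<lambda>k. \<Sum>c<p. \<Sum>m\<in>{1..<p}. a c m * act p c m (ybar p) k) k"
    proof (cases "k < p")
      case False then show ?thesis using fQ by (simp add: fpnorm_def Quot_def)
    next
      case True
      let ?k' = "if k = 0 then p - 1 else k - 1"
      have s1: "(\<Sum>m\<in>{1..<p}. a c m * act p c m (ybar p) k) = A c * act p c 1 (ybar p) k" for c
      proof -
        have "(\<Sum>m\<in>{1..<p}. a c m * act p c m (ybar p) k)
             = (\<Sum>m\<in>{1..<p}. if m = 1 then A c * act p c m (ybar p) k else 0)"
          by (rule sum.cong) (auto simp: a_def)
        also have "\<dots> = A c * act p c 1 (ybar p) k" using p3 by simp
        finally show ?thesis .
      qed
      have "(\<Sum>c<p. \<Sum>m\<in>{1..<p}. a c m * act p c m (ybar p) k) = (\<Sum>c<p. A c * act p c 1 (ybar p) k)"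
        by (simp only: s1)
      also have "[\<dots> = (\<Sum>c<p. A c * (int k - int c) ^ (p - 2))] (mod int p)"
      proof (rule cong_sum, rule cong_scalar_left)
        fix c
        let ?x = "nat ((int k - int c) mod int p)"
        have x: "?x < p" using p0 by (simp add: nat_less_iff)
        have "act p c 1 (ybar p) k = ybar p ?x mod int p" by (rule act1[OF p0 True])
        also have "[\<dots> = int ?x ^ (p - 2)] (mod int p)"
          using ybar_cong[OF p p3 x] by simp
        also have "int ?x = (int k - int c) mod int p" using p0 by simp
        also have "[((int k - int c) mod int p) ^ (p - 2) = (int k - int c) ^ (p - 2)] (mod int p)"
          by (intro cong_pow) (simp add: cong_def)
        finally show "[act p c 1 (ybar p) k = (int k - int c) ^ (p - 2)] (mod int p)" .
      qed
      also have "(\<Sum>c<p. A c * (int k - int c) ^ (p - 2))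
          = (\<Sum>c'<p. F c' * (\<Sum>m<p - 1. M m *
               (\<Sum>c<p. (int c - int c') ^ (m + 1) * (int k - int c) ^ (p - 2))))"
      proof -
        have "(\<Sum>c<p. A c * (int k - int c) ^ (p - 2))
           = (\<Sum>c<p. \<Sum>c'<p. \<Sum>m<p - 1. F c' * M m * ((int c - int c') ^ (m + 1) * (int k - int c) ^ (p - 2)))"
          unfolding A_def by (simp only: sum_distrib_left sum_distrib_right mult.assoc)
        also have "\<dots> = (\<Sum>c'<p. \<Sum>c<p. \<Sum>m<p - 1. F c' * M m * ((int c - int c') ^ (m + 1) * (int k - int c) ^ (p - 2)))"
          by (rule sum.swap)
        also have "\<dots> = (\<Sum>c'<p. \<Sum>m<p - 1. \<Sum>c<p. F c' * M m * ((int c - int c') ^ (m + 1) * (int k - int c) ^ (p - 2)))"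
          by (rule sum.cong[OF refl], rule sum.swap)
        also have "\<dots> = (\<Sum>c'<p. F c' * (\<Sum>m<p - 1. M m *
               (\<Sum>c<p. (int c - int c') ^ (m + 1) * (int k - int c) ^ (p - 2))))"
          by (simp only: sum_distrib_left mult.assoc)
        finally show ?thesis .
      qed
      also have "[\<dots> = (\<Sum>c'<p. F c' * (\<Sum>m<p - 1. M m * (int (m + 1) * (int k - int c') ^ m)))] (mod int p)"
        by (intro cong_sum cong_scalar_left inner_conv[OF p p3]) simp
      also have "[(\<Sum>c'<p. F c' * (\<Sum>m<p - 1. M m * (int (m + 1) * (int k - int c') ^ m))) = (\<Sum>c'<p. F c' * (\<Sum>m<p - 1. (int k - int c') ^ m))] (mod int p)"
      proof (rule cong_sum, rule cong_scalar_left, rule cong_sum)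
        fix c' m assume "c' \<in> {..<p}" and m: "m \<in> {..<p - 1}"
        have "[M m * int (m + 1) = 1] (mod int p)"
          using modinv_mul[OF p, of "m + 1"] m by (simp add: M_def mult.commute)
        then have "[M m * int (m + 1) * (int k - int c') ^ m = 1 * (int k - int c') ^ m] (mod int p)"
          by (rule cong_scalar_right)
        then show "[M m * (int (m + 1) * (int k - int c') ^ m) = (int k - int c') ^ m] (mod int p)"
          by (simp add: mult.assoc)
      qed
      also have "[(\<Sum>c'<p. F c' * (\<Sum>m<p - 1. (int k - int c') ^ m)) = (\<Sum>c'<p. F c' * ((if c' = k then 1 else 0) - (if c' = ?k' then 1 else 0)))] (mod int p)"
      proof (rule cong_sum, rule cong_scalar_left)
        fix c' assume c': "c' \<in> {..<p}"
        show "[(\<Sum>m<p - 1. (int k - int c') ^ m) = (if c' = k then 1 else 0) - (if c' = ?k' then 1 else 0)] (mod int p)"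
          using geo[OF p, of "int k - int c'"] delta0[OF True, of c'] delta1[OF True, of c'] c'
          by simp
      qed
      also have "(\<Sum>c'<p. F c' * ((if c' = k then 1 else 0) - (if c' = ?k' then 1 else 0))) = F k - F ?k'"
      proof -
        have "?k' < p" using True by auto
        have "(\<Sum>c'<p. F c' * ((if c' = k then 1 else 0) - (if c' = ?k' then 1 else 0)))
            = (\<Sum>c'<p. (if c' = k then F c' else 0)) - (\<Sum>c'<p. (if c' = ?k' then F c' else 0))"
        proof -
          have "(\<Sum>c'<p. F c' * ((if c' = k then 1 else 0) - (if c' = ?k' then 1 else 0)))
              = (\<Sum>c'<p. (if c' = k then F c' else 0) - (if c' = ?k' then F c' else 0))"
            by (rule sum.cong) auto
          then show ?thesis by (simp only: sum_subtractf)
        qed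
        also have "\<dots> = F k - F ?k'" using True \<open>?k' < p\<close> by (simp only: sum.delta finite_lessThan lessThan_iff if_True)
        finally show ?thesis .
      qed
      also have "[F k - F ?k' = f k] (mod int p)"
      proof (cases "k = 0")
        case True
        have "{..p - 1} = {..<p}" using p0 by auto
        then have "[F (p - 1) = 0] (mod int p)" using fs by (simp add: F_def cong_def)
        moreover have "F k = f 0" using True by (simp add: F_def)
        ultimately show ?thesis using True cong_diff[OF cong_refl[of "f 0"], of "F (p - 1)" 0] by simp
      next
        case False
        have "F k = F (k - 1) + f k" using False unfolding F_def by (cases k) simp_all
        then show ?thesis using False by simp
      qed
      finally have "[(\<Sum>c<p. \<Sum>m\<in>{1..<p}. a c m * act p c m (ybar p) k) = f k] (mod int p)" .
      then show ?thesis using True Quot_mod[OF fQ True] by (simp add: fpnorm_def cong_def)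
    qed
  qed
  then show "f \<in> gen_submodule p (ybar p)" by (auto simp: gen_submodule_def)
qed


theorem mainTheorem19:
  fixes p :: nat
  assumes "prime p" and "odd p"
  shows "gen_submodule p (ybar p) = t_minus_1_ideal p \<and> gen_submodule p (ybar p) = aug_kernel p"
proof -
  have p2: "p \<ge> 2" using assms(1) prime_ge_2_nat by blast
  have "p \<noteq> 2" using assms(2) by auto
  then have p3: "p \<ge> 3" using p2 by simp
  have p0: "p > 0" using p3 by simp
  have g: "gen_submodule p (ybar p) = aug_kernel p"
    using gen_sub_aug[OF assms(1) p3] aug_sub_gen[OF assms(1) p3] by blast
  have t: "t_minus_1_ideal p = aug_kernel p"
    using ideal_sub_aug[OF p0] aug_sub_ideal[OF p0] by blast
  show ?thesis using g t by simp
qed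

end
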